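(* Let $t\in\mathbb{N}$ and let $H$ be a graph with vertex set $A\cup T$ such that: (1) $|A|\ge 3t^2+t+1$; (2) $A$ is a clique in $H$; (3) $T=V(Q_1)\cup V(Q_2)\cup V(Q_3)$, where $Q_1,Q_2,Q_3$ are paths in $H$, each starting at a common vertex $w\notin A$ and ending in $A$, such that $Q_1-w$, $Q_2-w$, $Q_3-w$ are pairwise vertex-disjoint; (4) $\deg_H(w)=3$; (5) $|A\cap T|=3$, and the three vertices of $A\cap T$ are the endpoints $y_1,y_2,y_3$ of $Q_1,Q_2,Q_3$ different from $w$; (6) $H[V(Q_1)\cup V(Q_2)]$ is a chordless cycle; (7) $A\setminus T$ and $T\setminus A$ are anticomplete to each other. Then $H\xrightarrow{\cap} tS_{t,t,t}$.
   Context: All graphs are finite and simple. For graphs $G_1=(V_1,E_1)$, $G_2=(V_2,E_2)$, $G_1\cap G_2=(V_1\cap V_2, E_1\cap E_2)$. For a graph $G=(V,E)$ and an injective map $\alpha$ on $V$, $G^{\alpha}$ has vertex set $\alpha(V)$ and edge set $\{\{\alpha(v),\alpha(w)\}: \{v,w\}\in E\}$. We write $G\xrightarrow{\cap} H$ if $H$ is (isomorphic to) $G^{\alpha_1}\cap\cdots\cap G^{\alpha_k}$ for some $k\ge1$ and injective maps $\alpha_1,\dots,\alpha_k$ on $V(G)$. For integers $a,b,c\ge1$, $S_{a,b,c}$ is the tree consisting of a vertex of degree $3$ together with three pendant paths having $a$, $b$, $c$ edges respectively; $tS_{t,t,t}$ is the disjoint union of $t$ copies of $S_{t,t,t}$.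 Sets are anticomplete if no edge joins them. *)

theory Defs
  imports Main
begin

definition graph :: "'a set \<Rightarrow> 'a set set \<Rightarrow> bool" where
  "graph V E \<longleftrightarrow> finite V \<and> (\<forall>e\<in>E. \<exists>u v. e = {u, v} \<and> u \<noteq> v \<and> u \<in> V \<and> v \<in> V)"

definition graph_iso :: "'a set \<Rightarrow> 'a set set \<Rightarrow> 'b set \<Rightarrow> 'b set set \<Rightarrow> bool" where
  "graph_iso V E V' E' \<longleftrightarrow>
     (\<exists>f. bij_betw f V V' \<and> (\<forall>u\<in>V. \<forall>v\<in>V. {u, v} \<in> E \<longleftrightarrow> {f u, f v} \<in> E'))"

text \<open>G \<rightarrow>\<inter> H: H is isomorphic to an intersection of k >= 1 injective relabellings of G.
  The relabellings take values in nat (a countably infinite universe, sufficient for finite graphs).\<close>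
definition int_reach :: "'a set \<Rightarrow> 'a set set \<Rightarrow> 'b set \<Rightarrow> 'b set set \<Rightarrow> bool" where
  "int_reach V E V' E' \<longleftrightarrow>
     (\<exists>k::nat. k \<ge> 1 \<and> (\<exists>\<alpha> :: nat \<Rightarrow> 'a \<Rightarrow> nat.
        (\<forall>i<k. inj_on (\<alpha> i) V) \<and>
        graph_iso V' E' (\<Inter>i<k. \<alpha> i ` V) (\<Inter>i<k. (\<lambda>e. \<alpha> i ` e) ` E)))"

text \<open>t S_{t,t,t}: copy c < t has centre (c,0,0) and legs j \<in> {1,2,3} with vertices (c,j,p), 1 <= p <= t.\<close>
definition tS_V :: "nat \<Rightarrow> (nat \<times> nat \<times> nat) set" where
  "tS_V t = {(c, 0, 0) | c. c < t} \<union> {(c, j, p) | c j p. c < t \<and> j \<in> {1,2,3} \<and> 1 \<le> p \<and> p \<le> t}"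

definition tS_E :: "nat \<Rightarrow> (nat \<times> nat \<times> nat) set set" where
  "tS_E t = {{(c, 0, 0), (c, j, 1)} | c j. c < t \<and> j \<in> {1,2,3}}
          \<union> {{(c, j, p), (c, j, p + 1)} | c j p. c < t \<and> j \<in> {1,2,3} \<and> 1 \<le> p \<and> p < t}"

definition is_path :: "'a set set \<Rightarrow> 'a list \<Rightarrow> bool" where
  "is_path E P \<longleftrightarrow> P \<noteq> [] \<and> distinct P \<and> (\<forall>i. Suc i < length P \<longrightarrow> {P ! i, P ! Suc i} \<in> E)"

definition degree :: "'a set \<Rightarrow> 'a set set \<Rightarrow> 'a \<Rightarrow> nat" where
  "degree V E w = card {v \<in> V. {w, v} \<in> E}"

definition induced_edges :: "'a set set \<Rightarrow> 'a set \<Rightarrow> 'a set set" where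
  "induced_edges E X = {e \<in> E. e \<subseteq> X}"

definition is_cycle :: "'a set \<Rightarrow> 'a set set \<Rightarrow> bool" where
  "is_cycle V E \<longleftrightarrow> (\<exists>vs. distinct vs \<and> length vs \<ge> 3 \<and> set vs = V \<and>
      E = {{vs ! i, vs ! ((i + 1) mod length vs)} | i. i < length vs})"

definition clique :: "'a set set \<Rightarrow> 'a set \<Rightarrow> bool" where
  "clique E A \<longleftrightarrow> (\<forall>x\<in>A. \<forall>y\<in>A. x \<noteq> y \<longrightarrow> {x, y} \<in> E)"

definition anticomplete :: "'a set set \<Rightarrow> 'a set \<Rightarrow> 'a set \<Rightarrow> bool" where
  "anticomplete E X Y \<longleftrightarrow> (\<forall>x\<in>X. \<forall>y\<in>Y. {x, y} \<notin> E)"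

end

theory Submission
  imports Defs "HOL-Library.Nat_Bijection"
begin


lemma realize:
  fixes V :: "'a set" and E and S :: "'b set" and F :: "'b set set" and \<Phi> :: "('b \<Rightarrow> 'a) set"
  assumes G: "graph V E" and fS: "finite S"
    and Fe: "\<forall>x\<in>S. {x} \<notin> F"
    and fPhi: "finite \<Phi>" and nePhi: "\<Phi> \<noteq> {}"
    and hom: "\<forall>\<phi>\<in>\<Phi>. inj_on \<phi> S \<and> \<phi> ` S \<subseteq> V \<and> (\<forall>x\<in>S. \<forall>y\<in>S. {x,y} \<in> F \<longrightarrow> {\<phi> x, \<phi> y} \<in> E)"
    and sep: "\<forall>x\<in>S. \<forall>y\<in>S. x \<noteq> y \<longrightarrow> {x,y} \<notin> F \<longrightarrow> (\<exists>\<phi>\<in>\<Phi>. {\<phi> x, \<phi> y} \<notin> E)"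
  shows "int_reach V E S F"
proof -
  obtain xs where xs: "set xs = \<Phi>" using finite_list fPhi by blast
  define ps where "ps = xs @ xs"
  have lenps: "length ps \<ge> 2" using xs nePhi ps_def by (cases xs) auto
  have setps: "set ps = \<Phi>" using xs ps_def by simp
  have fV: "finite V" using G unfolding graph_def by (rule conjunct1)
  obtain enc :: "'a \<Rightarrow> nat" and n where enc: "inj_on enc V" using finite_imp_inj_to_nat_seg[OF fV] by blast
  obtain cd :: "'b \<Rightarrow> nat" and m where cd: "inj_on cd S" using finite_imp_inj_to_nat_seg[OF fS] by blast
  define \<alpha> where "\<alpha> i v = (if v \<in> (ps!i) ` S then 2 * cd (the_inv_into S (ps!i) v) else Suc (2 * prod_encode (i, enc v)))" for i v
  define k where "k = length ps"
  have psi: "ps ! i \<in> \<Phi>" if "i < k" for i using that setps unfolding k_def by (metis nth_mem)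
  have injps: "inj_on (ps!i) S" and imps: "(ps!i) ` S \<subseteq> V" if "i < k" for i using psi[OF that] hom by auto
  have ha: "\<alpha> i ((ps ! i) x) = 2 * cd x" if "i < k" "x \<in> S" for i x
    using the_inv_into_f_f[OF injps[OF that(1)] that(2)] that unfolding \<alpha>_def by auto
  have inja: "inj_on (\<alpha> i) V" if i: "i < k" for i
  proof (rule inj_onI)
    fix u v assume uv: "u \<in> V" "v \<in> V" "\<alpha> i u = \<alpha> i v"
    show "u = v"
    proof (cases "u \<in> (ps!i) ` S")
      case True
      then obtain a where a: "a \<in> S" "u = (ps ! i) a" by blast
      show ?thesis
      proof (cases "v \<in> (ps!i) ` S")
        case True
        then obtain b where b: "b \<in> S" "v = (ps ! i) b" by blast
        have "2 * cd a = 2 * cd b" using uv(3) ha[OF i a(1)] ha[OF i b(1)] a b by simp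
        then have "a = b" using cd a b by (simp add: inj_on_eq_iff)
        then show ?thesis using a b by simp
      next
        case False
        then have "\<alpha> i v = Suc (2 * prod_encode (i, enc v))" unfolding \<alpha>_def by simp
        moreover have "\<alpha> i u = 2 * cd a" using ha[OF i a(1)] a by simp
        ultimately have False using uv(3) by presburger
        then show ?thesis ..
      qed
    next
      case False
      then have au: "\<alpha> i u = Suc (2 * prod_encode (i, enc u))" unfolding \<alpha>_def by simp
      show ?thesis
      proof (cases "v \<in> (ps!i) ` S")
        case True
        then obtain b where b: "b \<in> S" "v = (ps ! i) b" by blast
        have "\<alpha> i v = 2 * cd b" using ha[OF i b(1)] b by simp
        then have False using uv(3) au by presburger
        then show ?thesis ..
      next
        case False
        then have "\<alpha> i v = Suc (2 * prod_encode (i, enc v))" unfolding \<alpha>_def by simp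
        then have "prod_encode (i, enc u) = prod_encode (i, enc v)" using au uv(3) by simp
        then have "enc u = enc v" by (simp add: prod_encode_eq)
        then show ?thesis using enc uv(1,2) by (simp add: inj_on_eq_iff)
      qed
    qed
  qed
  define f where "f x = 2 * cd x" for x
  have injf: "inj_on f S" using cd unfolding f_def inj_on_def by auto
  have k2: "k \<ge> 2" using lenps k_def by simp
  have IV: "(\<Inter>i<k. \<alpha> i ` V) = f ` S"
  proof
    show "f ` S \<subseteq> (\<Inter>i<k. \<alpha> i ` V)"
    proof
      fix n assume "n \<in> f ` S"
      then obtain x where x: "x \<in> S" "n = f x" by blast
      show "n \<in> (\<Inter>i<k. \<alpha> i ` V)"
      proof
        fix i assume "i \<in> {..<k}"
        then have i: "i < k" by simp
        have "n = \<alpha> i ((ps ! i) x)" using ha[OF i x(1)] x f_def by simp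
        moreover have "(ps ! i) x \<in> V" using imps[OF i] x by blast
        ultimately show "n \<in> \<alpha> i ` V" by blast
      qed
    qed
  next
    show "(\<Inter>i<k. \<alpha> i ` V) \<subseteq> f ` S"
    proof
      fix n assume n: "n \<in> (\<Inter>i<k. \<alpha> i ` V)"
      have "0 < k" "1 < k" using k2 by auto
      then have n0: "n \<in> \<alpha> 0 ` V" and n1: "n \<in> \<alpha> 1 ` V" using n by auto
      obtain u where u: "u \<in> V" "n = \<alpha> 0 u" using n0 by blast
      obtain v where v: "v \<in> V" "n = \<alpha> 1 v" using n1 by blast
      show "n \<in> f ` S"
      proof (cases "u \<in> (ps!0) ` S")
        case True
        then have "n = f (the_inv_into S (ps!0) u)" using u unfolding \<alpha>_def f_def by simp
        moreover have "the_inv_into S (ps!0) u \<in> S"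
          using the_inv_into_into[OF injps[OF \<open>0 < k\<close>] True] by simp
        ultimately show ?thesis by blast
      next
        case False
        then have nu: "n = Suc (2 * prod_encode (0, enc u))" using u unfolding \<alpha>_def by simp
        show ?thesis
        proof (cases "v \<in> (ps!1) ` S")
          case True
          then have "n = 2 * cd (the_inv_into S (ps!1) v)" using v unfolding \<alpha>_def by simp
          then have False using nu by presburger
          then show ?thesis ..
        next
          case False
          then have "n = Suc (2 * prod_encode (1, enc v))" using v unfolding \<alpha>_def by simp
          then have "prod_encode (0, enc u) = prod_encode (1, enc v)" using nu by simp
          then show ?thesis by (simp add: prod_encode_eq)
        qed
      qed
    qed
  qed
  have edge: "{f u, f v} \<in> (\<Inter>i<k. (\<lambda>e. \<alpha> i ` e) ` E) \<longleftrightarrow> (\<forall>i<k. {(ps ! i) u, (ps ! i) v} \<in> E)"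
    if uv: "u \<in> S" "v \<in> S" for u v
  proof
    assume h: "{f u, f v} \<in> (\<Inter>i<k. (\<lambda>e. \<alpha> i ` e) ` E)"
    show "\<forall>i<k. {(ps ! i) u, (ps ! i) v} \<in> E"
    proof (intro allI impI)
      fix i assume i: "i < k"
      have "{f u, f v} \<in> (\<lambda>e. \<alpha> i ` e) ` E" using h i by (simp only: INT_iff lessThan_iff)
      then obtain e where e: "e \<in> E" "\<alpha> i ` e = {f u, f v}" by (auto simp only: image_iff)
      have eV: "e \<subseteq> V" using G e(1) unfolding graph_def by fastforce
      have pV: "{(ps ! i) u, (ps ! i) v} \<subseteq> V" using imps[OF i] uv by blast
      have "\<alpha> i ` {(ps ! i) u, (ps ! i) v} = {f u, f v}" using ha[OF i] uv f_def by simp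
      then have "\<alpha> i ` e = \<alpha> i ` {(ps ! i) u, (ps ! i) v}" using e by simp
      then have "e = {(ps ! i) u, (ps ! i) v}" using inj_on_image_eq_iff[OF inja[OF i] eV pV] by simp
      then show "{(ps ! i) u, (ps ! i) v} \<in> E" using e by simp
    qed
  next
    assume h: "\<forall>i<k. {(ps ! i) u, (ps ! i) v} \<in> E"
    show "{f u, f v} \<in> (\<Inter>i<k. (\<lambda>e. \<alpha> i ` e) ` E)"
    proof
      fix i assume "i \<in> {..<k}"
      then have i: "i < k" by simp
      have "\<alpha> i ` {(ps ! i) u, (ps ! i) v} = {f u, f v}" using ha[OF i] uv f_def by simp
      then show "{f u, f v} \<in> (\<lambda>e. \<alpha> i ` e) ` E" using h i by (metis image_eqI)
    qed
  qed
  have allps: "(\<forall>i<k. P (ps ! i)) \<longleftrightarrow> (\<forall>\<phi>\<in>\<Phi>. P \<phi>)" for P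
    using setps unfolding k_def by (metis in_set_conv_nth)
  have iso: "graph_iso S F (\<Inter>i<k. \<alpha> i ` V) (\<Inter>i<k. (\<lambda>e. \<alpha> i ` e) ` E)"
    unfolding graph_iso_def
  proof (intro exI conjI ballI)
    show "bij_betw f S (\<Inter>i<k. \<alpha> i ` V)" using injf IV by (simp add: bij_betw_def)
  next
    fix u v assume uv: "u \<in> S" "v \<in> S"
    have "{u, v} \<in> F \<longleftrightarrow> (\<forall>\<phi>\<in>\<Phi>. {\<phi> u, \<phi> v} \<in> E)"
    proof
      assume "{u,v} \<in> F" then show "\<forall>\<phi>\<in>\<Phi>. {\<phi> u, \<phi> v} \<in> E" using hom uv by blast
    next
      assume h: "\<forall>\<phi>\<in>\<Phi>. {\<phi> u, \<phi> v} \<in> E"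
      show "{u,v} \<in> F"
      proof (cases "u = v")
        case True
        obtain \<phi> where "\<phi> \<in> \<Phi>" using nePhi by blast
        then have "{\<phi> u} \<in> E" using h True by auto
        then obtain a b where "{\<phi> u} = {a,b}" "a \<noteq> b" using G unfolding graph_def by blast
        then show ?thesis by (metis doubleton_eq_iff insert_absorb2)
      next
        case False
        then show ?thesis using sep uv h by blast
      qed
    qed
    also have "\<dots> \<longleftrightarrow> (\<forall>i<k. {(ps ! i) u, (ps ! i) v} \<in> E)" using allps[of "\<lambda>\<phi>. {\<phi> u, \<phi> v} \<in> E"] by simp
    also have "\<dots> \<longleftrightarrow> {f u, f v} \<in> (\<Inter>i<k. (\<lambda>e. \<alpha> i ` e) ` E)" using edge[OF uv] by simp
    finally show "{u, v} \<in> F \<longleftrightarrow> {f u, f v} \<in> (\<Inter>i<k. (\<lambda>e. \<alpha> i ` e) ` E)" .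
  qed
  show ?thesis unfolding int_reach_def using k2 inja iso by (intro exI[of _ k]) auto
qed




definition adj :: "nat \<times> nat \<times> nat \<Rightarrow> nat \<times> nat \<times> nat \<Rightarrow> bool" where
  "adj x y \<longleftrightarrow> fst x = fst y \<and> fst (snd y) \<in> {1,2,3} \<and>
     ((fst (snd x) = 0 \<and> snd (snd x) = 0 \<and> snd (snd y) = 1) \<or>
      (fst (snd x) = fst (snd y) \<and> snd (snd y) = Suc (snd (snd x)) \<and> snd (snd x) \<ge> 1))"

lemma memS: "(c, j, p) \<in> tS_V t \<longleftrightarrow> c < t \<and> (j = 0 \<and> p = 0 \<or> j \<in> {1,2,3} \<and> 1 \<le> p \<and> p \<le> t)"
  unfolding tS_V_def by auto

lemma tS_V_eq: "tS_V t = {..<t} \<times> ({(0,0)} \<union> ({1,2,3} \<times> {1..t}))"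
  unfolding tS_V_def by auto

lemma finS: "finite (tS_V t)"
  unfolding tS_V_eq by auto

lemma cardS: "card (tS_V t) = t * (3 * t + 1)"
proof -
  have d: "{(0::nat,0::nat)} \<inter> ({1,2,3} \<times> {1..t}) = {}" by auto
  have "card ({(0::nat,0::nat)} \<union> ({1,2,3} \<times> {1..t})) = 1 + 3 * t"
    using card_Un_disjoint[OF _ _ d] by (simp add: card_cartesian_product)
  then show ?thesis unfolding tS_V_eq by (simp add: card_cartesian_product)
qed

lemma adj_tS_E:
  assumes "(c,j,p) \<in> tS_V t" "(c',j',p') \<in> tS_V t" "adj (c,j,p) (c',j',p')"
  shows "{(c,j,p), (c',j',p')} \<in> tS_E t"
proof -
  have c: "c' = c" "c < t" "j' \<in> {1,2,3}" using assms unfolding adj_def memS by auto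
  show ?thesis
  proof (cases "j = 0 \<and> p = 0 \<and> p' = 1")
    case True
    then have "{(c,j,p), (c',j',p')} = {(c, 0, 0), (c, j', 1)}" using c by simp
    then show ?thesis unfolding tS_E_def using c by blast
  next
    case False
    then have h: "j = j'" "p' = Suc p" "p \<ge> 1" using assms(3) unfolding adj_def by auto
    then have "p < t" using assms(2) unfolding memS by auto
    then have "{(c,j,p), (c',j',p')} = {(c, j', p), (c, j', p + 1)}" using c h by simp
    then show ?thesis unfolding tS_E_def using c h \<open>p < t\<close> by blast
  qed
qed

lemma tS_E_adj:
  assumes "{x, y} \<in> tS_E t"
  shows "adj x y \<or> adj y x"
proof -
  have "{x,y} \<in> {{(c, 0, 0), (c, j, 1)} | c j. c < t \<and> j \<in> {1,2,3}} \<or>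
        {x,y} \<in> {{(c, j, p), (c, j, p + 1)} | c j p. c < t \<and> j \<in> {1,2,3} \<and> 1 \<le> p \<and> p < t}"
    using assms unfolding tS_E_def Un_iff .
  then consider
    (a) c j where "{x, y} = {(c, 0, 0), (c, j, 1)}" "c < t" "j \<in> {1,2,3}"
  | (b) c j p where "{x, y} = {(c, j, p), (c, j, p + 1)}" "c < t" "j \<in> {1,2,3}" "1 \<le> p" "p < t"
    unfolding mem_Collect_eq by metis
  then show ?thesis
  proof cases
    case a
    then have "x = (c,0,0) \<and> y = (c,j,1) \<or> x = (c,j,1) \<and> y = (c,0,0)"
      by (simp add: doubleton_eq_iff)
    then show ?thesis using a(3) by (elim disjE) (simp_all add: adj_def)
  next
    case b
    then have "x = (c,j,p) \<and> y = (c,j,p+1) \<or> x = (c,j,p+1) \<and> y = (c,j,p)"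
      by (simp add: doubleton_eq_iff)
    then show ?thesis using b(3,4) by (elim disjE) (simp_all add: adj_def)
  qed
qed

lemma tS_E_iff:
  assumes "x \<in> tS_V t" "y \<in> tS_V t"
  shows "{x, y} \<in> tS_E t \<longleftrightarrow> adj x y \<or> adj y x"
proof
  assume "{x, y} \<in> tS_E t" then show "adj x y \<or> adj y x" by (rule tS_E_adj)
next
  assume a: "adj x y \<or> adj y x"
  obtain c j p c' j' p' where xy: "x = (c,j,p)" "y = (c',j',p')" by (cases x, cases y) auto
  show "{x, y} \<in> tS_E t"
    using a adj_tS_E[of c j p t c' j' p'] adj_tS_E[of c' j' p' t c j p] assms xy by (auto simp: insert_commute)
qed

lemma single_notin: "{x} \<notin> tS_E t"
proof
  assume "{x} \<in> tS_E t"
  then have "adj x x \<or> adj x x" using tS_E_adj[of x x t] by simp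
  then show False unfolding adj_def by auto
qed




locale L =
  fixes t :: nat and A :: "'a set" and E :: "'a set set"
    and Q1 Q2 Q3 :: "'a list" and w :: 'a
  assumes t: "t \<ge> 1"
    and G: "graph (A \<union> (set Q1 \<union> set Q2 \<union> set Q3)) E"
    and sizeA: "card A \<ge> 3 * t^2 + t + 1"
    and cliqueA: "clique E A"
    and paths: "is_path E Q1" "is_path E Q2" "is_path E Q3"
    and start: "hd Q1 = w" "hd Q2 = w" "hd Q3 = w"
    and wA: "w \<notin> A"
    and ends: "last Q1 \<in> A" "last Q2 \<in> A" "last Q3 \<in> A"
    and disj: "(set Q1 - {w}) \<inter> (set Q2 - {w}) = {}"
              "(set Q1 - {w}) \<inter> (set Q3 - {w}) = {}"
              "(set Q2 - {w}) \<inter> (set Q3 - {w}) = {}"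
    and AT: "card (A \<inter> (set Q1 \<union> set Q2 \<union> set Q3)) = 3"
            "A \<inter> (set Q1 \<union> set Q2 \<union> set Q3) = {last Q1, last Q2, last Q3}"
    and anti: "anticomplete E (A - (set Q1 \<union> set Q2 \<union> set Q3)) ((set Q1 \<union> set Q2 \<union> set Q3) - A)"
begin

definition "T = set Q1 \<union> set Q2 \<union> set Q3"
definition "V = A \<union> T"
definition "B = A - T"
definition "S = tS_V t"
definition "Qs j = (if j = (1::nat) then Q1 else if j = 2 then Q2 else Q3)"

definition hom :: "(nat \<times> nat \<times> nat \<Rightarrow> 'a) \<Rightarrow> bool" where
  "hom \<phi> \<longleftrightarrow> inj_on \<phi> S \<and> \<phi> ` S \<subseteq> V \<and> (\<forall>x\<in>S. \<forall>y\<in>S. adj x y \<longrightarrow> {\<phi> x, \<phi> y} \<in> E)"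

lemma finV: "finite V" using G unfolding graph_def V_def T_def by (rule conjunct1)
lemma finA: "finite A" using finV unfolding V_def by simp
lemma finB: "finite B" using finA unfolding B_def by simp
lemma BA: "B \<subseteq> A" unfolding B_def by auto
lemma BT: "x \<in> B \<Longrightarrow> x \<notin> T" unfolding B_def by auto
lemma AV: "A \<subseteq> V" and TV: "T \<subseteq> V" unfolding V_def by auto

lemma cardB: "card B + 3 = card A"
proof -
  have "card A = card (A - T) + card (A \<inter> T)"
    using finA by (metis Diff_Diff_Int card_Diff_subset_Int card_mono Int_lower1 finite_Int le_add_diff_inverse2 add.commute)
  then show ?thesis using AT(1) unfolding B_def T_def by simp
qed

lemma cardB2: "card B \<ge> t * (3 * t + 1) - 2"
proof -
  have "t * (3 * t + 1) = 3 * t^2 + t" by (simp add: power2_eq_square algebra_simps)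
  then show ?thesis using cardB sizeA by linarith
qed

lemma clq: "a \<in> A \<Longrightarrow> b \<in> A \<Longrightarrow> a \<noteq> b \<Longrightarrow> {a, b} \<in> E"
  using cliqueA unfolding clique_def by blast

lemma antiE: "b \<in> B \<Longrightarrow> x \<in> T \<Longrightarrow> x \<notin> A \<Longrightarrow> {x, b} \<notin> E"
  using anti unfolding anticomplete_def B_def T_def by (metis DiffI insert_commute)

lemma Qs_cases: "Qs j = Q1 \<or> Qs j = Q2 \<or> Qs j = Q3" unfolding Qs_def by auto

lemma Qs_path: "is_path E (Qs j)" using Qs_cases paths by metis
lemma Qs_hd: "hd (Qs j) = w" using Qs_cases start by metis
lemma Qs_last: "last (Qs j) \<in> A" using Qs_cases ends by metis
lemma Qs_T: "set (Qs j) \<subseteq> T" using Qs_cases[of j] unfolding T_def by auto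

lemma Qs_ne: "Qs j \<noteq> []" using Qs_path unfolding is_path_def by blast
lemma Qs_dist: "distinct (Qs j)" using Qs_path unfolding is_path_def by blast
lemma Qs_edge: "Suc i < length (Qs j) \<Longrightarrow> {Qs j ! i, Qs j ! Suc i} \<in> E"
  using Qs_path unfolding is_path_def by blast
lemma Qs_0: "Qs j ! 0 = w" using Qs_hd Qs_ne hd_conv_nth by metis
lemma Qs_len: "length (Qs j) \<ge> 2"
proof (rule ccontr)
  assume "\<not> 2 \<le> length (Qs j)"
  moreover have "length (Qs j) \<noteq> 0" using Qs_ne[of j] by simp
  ultimately have "length (Qs j) = 1" by linarith
  then have "last (Qs j) = hd (Qs j)" by (cases "Qs j") auto
  then show False using Qs_last[of j] Qs_hd[of j] wA by simp
qed
lemma Qs_lastn: "Qs j ! (length (Qs j) - 1) \<in> A" using Qs_last Qs_ne last_conv_nth by metis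
lemma Qs_nw: "0 < p \<Longrightarrow> p < length (Qs j) \<Longrightarrow> Qs j ! p \<noteq> w"
  using nth_eq_iff_index_eq[OF Qs_dist[of j], of p 0] Qs_0[of j] Qs_ne[of j] by auto
lemma Qs_in: "p < length (Qs j) \<Longrightarrow> Qs j ! p \<in> T" using Qs_T nth_mem by blast

lemma Qs_disj: "j \<in> {1,2,3} \<Longrightarrow> j' \<in> {1,2,3} \<Longrightarrow> j \<noteq> j' \<Longrightarrow> x \<in> set (Qs j) \<Longrightarrow> x \<in> set (Qs j') \<Longrightarrow> x = w"
  unfolding Qs_def using disj by auto

end



context L begin

lemma memS': "(c, j, p) \<in> S \<longleftrightarrow> c < t \<and> (j = 0 \<and> p = 0 \<or> j \<in> {1,2,3} \<and> 1 \<le> p \<and> p \<le> t)"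
  unfolding S_def by (rule memS)

lemma finS': "finite S" unfolding S_def by (rule finS)
lemma cardS': "card S = t * (3 * t + 1)" unfolding S_def by (rule cardS)

lemma center_hom:
  assumes c0: "c0 < t"
  shows "\<exists>\<phi>. hom \<phi> \<and> \<phi> (c0,0,0) = w \<and> (\<forall>c<t. c \<noteq> c0 \<longrightarrow> \<phi> (c,0,0) \<in> B)"
proof -
  define onW where "onW x \<longleftrightarrow> fst x = c0 \<and> snd (snd x) < length (Qs (fst (snd x)))" for x :: "nat \<times> nat \<times> nat"
  define X where "X = {x\<in>S. \<not> onW x}"
  define D where "D = {(c0,0::nat,0::nat),(c0,1,1),(c0,2,1),(c0,3,1)}"
  have DS: "D \<subseteq> S" using c0 t unfolding D_def by (auto simp: memS')
  have cD: "card D = 4" by (simp add: D_def)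
  have "\<forall>x\<in>D. onW x" unfolding D_def onW_def using Qs_len[of 0] Qs_len[of 1] Qs_len[of 2] Qs_len[of 3] by auto
  then have XD: "X \<subseteq> S - D" unfolding X_def by blast
  have "card X \<le> card (S - D)" using XD finS' by (simp add: card_mono)
  also have "\<dots> = card S - 4" using DS cD finS' by (simp add: card_Diff_subset finite_subset)
  also have "\<dots> \<le> card B" using cardB2 cardS' by linarith
  finally have cXB: "card X \<le> card B" .
  have fX: "finite X" using finS' unfolding X_def by simp
  obtain g where g: "g ` X \<subseteq> B" "inj_on g X" using card_le_inj[OF fX finB cXB] by blast
  define \<phi> where "\<phi> x = (if onW x then Qs (fst (snd x)) ! snd (snd x) else g x)" for x
  have imX: "\<phi> x \<in> B" if "x \<in> S" "\<not> onW x" for x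
    using that g unfolding \<phi>_def X_def by auto
  have imW: "\<phi> x \<in> T" if "onW x" for x
    using that Qs_in unfolding \<phi>_def onW_def by auto
  have inj: "inj_on \<phi> S"
  proof (rule inj_onI)
    fix x y assume xS: "x \<in> S" and yS: "y \<in> S" and eq: "\<phi> x = \<phi> y"
    obtain c j p c' j' p' where xy: "x = (c,j,p)" "y = (c',j',p')" by (cases x, cases y) auto
    show "x = y"
    proof (cases "onW x")
      case wx: True
      show ?thesis
      proof (cases "onW y")
        case wy: True
        have cc: "c = c0" "c' = c0" using wx wy xy unfolding onW_def by auto
        have pl: "p < length (Qs j)" "p' < length (Qs j')" using wx wy xy unfolding onW_def by auto
        have ev: "Qs j ! p = Qs j' ! p'" using eq wx wy xy unfolding \<phi>_def by simp
        show ?thesis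
        proof (cases "p = 0")
          case True
          then have "j = 0" using xS xy memS' by auto
          have "Qs j ! p = w" using True Qs_0 by simp
          then have "p' = 0" using ev Qs_nw[of p' j'] pl by (cases "p' = 0") auto
          then have "j' = 0" using yS xy memS' by auto
          then show ?thesis using xy cc True \<open>j = 0\<close> \<open>p' = 0\<close> by simp
        next
          case False
          have j: "j \<in> {1,2,3}" using False xS xy memS' by auto
          have "Qs j ! p \<noteq> w" using Qs_nw[of p j] False pl by simp
          then have "p' \<noteq> 0" using ev Qs_0[of j'] by (cases "p' = 0") auto
          then have j': "j' \<in> {1,2,3}" using yS xy memS' by auto
          show ?thesis
          proof (cases "j = j'")
            case True
            then have "p = p'" using ev nth_eq_iff_index_eq[OF Qs_dist[of j] pl(1), of p'] pl(2) by auto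
            then show ?thesis using xy cc True by simp
          next
            case False
            have "Qs j ! p \<in> set (Qs j)" "Qs j ! p \<in> set (Qs j')" using ev pl nth_mem by metis+
            then have "Qs j ! p = w" using Qs_disj[OF j j' False] by blast
            then show ?thesis using \<open>Qs j ! p \<noteq> w\<close> by simp
          qed
        qed
      next
        case wy: False
        have "\<phi> x \<in> T" "\<phi> y \<in> B" using imW[OF wx] imX[OF yS wy] by auto
        then show ?thesis using eq BT by auto
      qed
    next
      case wx: False
      show ?thesis
      proof (cases "onW y")
        case wy: True
        have "\<phi> y \<in> T" "\<phi> x \<in> B" using imW[OF wy] imX[OF xS wx] by auto
        then show ?thesis using eq BT by auto
      next
        case wy: False
        have "g x = g y" using eq wx wy unfolding \<phi>_def by simp
        then show ?thesis using g(2) xS yS wx wy unfolding X_def inj_on_def by blast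
      qed
    qed
  qed
  have edges: "{\<phi> x, \<phi> y} \<in> E" if xS: "x \<in> S" and yS: "y \<in> S" and a: "adj x y" for x y
  proof -
    obtain c j p c' j' p' where xy: "x = (c,j,p)" "y = (c',j',p')" by (cases x, cases y) auto
    have h: "c' = c" "j' \<in> {1,2,3}" "p' = Suc p" "(j = 0 \<and> p = 0) \<or> (j = j' \<and> p \<ge> 1)"
      using a xy unfolding adj_def by auto
    have xney: "x \<noteq> y" using xy h by auto
    have L2: "length (Qs j') \<ge> 2" "length (Qs 0) \<ge> 2" using Qs_len by auto
    show ?thesis
    proof (cases "onW y")
      case wy: True
      have y1: "c = c0" "Suc p < length (Qs j')" using wy xy h unfolding onW_def by auto
      have wx: "onW x" using y1 h xy L2 unfolding onW_def by auto
      have "\<phi> x = Qs j' ! p"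
        using h wx xy Qs_0 unfolding \<phi>_def by auto
      moreover have "\<phi> y = Qs j' ! Suc p" using wy xy h unfolding \<phi>_def by simp
      ultimately show ?thesis using Qs_edge[OF y1(2)] by simp
    next
      case wy: False
      show ?thesis
      proof (cases "onW x")
        case wx: True
        have "c = c0" using wx xy unfolding onW_def by simp
        then have "\<not> Suc p < length (Qs j')" using wy xy h unfolding onW_def by simp
        then have jj: "j = j'" "p \<ge> 1" using h L2 by auto
        then have "p = length (Qs j') - 1" using wx xy \<open>\<not> Suc p < length (Qs j')\<close> unfolding onW_def by auto
        then have "\<phi> x \<in> A" using wx xy jj Qs_lastn unfolding \<phi>_def by simp
        moreover have "\<phi> y \<in> B" using imX[OF yS wy] .
        moreover have "\<phi> x \<noteq> \<phi> y" using imW[OF wx] \<open>\<phi> y \<in> B\<close> BT by auto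
        ultimately show ?thesis using clq BA by auto
      next
        case wx: False
        have "\<phi> x \<in> B" "\<phi> y \<in> B" using imX xS yS wx wy by auto
        moreover have "\<phi> x \<noteq> \<phi> y" using inj xS yS xney unfolding inj_on_def by blast
        ultimately show ?thesis using clq BA by auto
      qed
    qed
  qed
  have imV: "\<phi> ` S \<subseteq> V"
  proof
    fix z assume "z \<in> \<phi> ` S"
    then obtain x where x: "x \<in> S" "z = \<phi> x" by blast
    then show "z \<in> V" using imX[of x] imW[of x] BA AV TV by (cases "onW x") auto
  qed
  have hom: "hom \<phi>" unfolding hom_def using inj imV edges by blast
  have "onW (c0,0,0)" unfolding onW_def using Qs_len[of 0] using Qs_ne[of 0] by simp
  then have "\<phi> (c0,0,0) = w" unfolding \<phi>_def using Qs_0 by simp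
  moreover have "\<phi> (c,0,0) \<in> B" if "c < t" "c \<noteq> c0" for c
    using imX[of "(c,0,0)"] that unfolding onW_def by (simp add: memS')
  ultimately show ?thesis using hom by blast
qed

end



lemma in_set_tlD: "x \<in> set (tl xs) \<Longrightarrow> x \<in> set xs" by (cases xs) auto

context L begin

definition "P = rev Q1 @ tl Q2"

lemma Qs123: "Qs 1 = Q1" "Qs 2 = Q2" "Qs 3 = Q3" unfolding Qs_def by auto

lemma lenP: "length P = length Q1 + length Q2 - 1" "length P \<ge> 3"
  using Qs_len[of 1, unfolded Qs123] Qs_len[of 2, unfolded Qs123] unfolding P_def by auto

lemma P0: "P ! 0 \<in> A"
proof -
  have n: "length Q1 \<ge> 2" using Qs_len[of 1, unfolded Qs123] by simp
  have "P ! 0 = rev Q1 ! 0" unfolding P_def using n by (simp add: nth_append del: length_greater_0_conv)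
  also have "\<dots> = Q1 ! (length Q1 - 1)" using n rev_nth[of 0 Q1] by (simp add: le_imp_less_Suc[THEN order.strict_trans1[rotated]] length_greater_0_conv[symmetric] del: length_greater_0_conv)
  finally show ?thesis using Qs_lastn[of 1, unfolded Qs123] by simp
qed

lemma Plast: "P ! (length P - 1) \<in> A"
proof -
  have n: "length Q1 \<ge> 2" "length Q2 \<ge> 2" using Qs_len[of 1, unfolded Qs123] Qs_len[of 2, unfolded Qs123] by auto
  have idx: "length P - 1 = length (rev Q1) + (length Q2 - 2)" using lenP(1) n by simp
  have "P ! (length P - 1) = tl Q2 ! (length Q2 - 2)" unfolding idx unfolding P_def by (rule nth_append_length_plus)
  also have "\<dots> = Q2 ! (length Q2 - 1)" using n by (simp add: nth_tl Suc_diff_Suc numeral_2_eq_2)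
  finally show ?thesis using Qs_lastn[of 2, unfolded Qs123] by simp
qed

lemma Pset: "set P \<subseteq> T"
  unfolding P_def T_def by (auto dest: in_set_tlD)

lemma Q2tl: "x \<in> set (tl Q2) \<Longrightarrow> x \<in> set Q2 \<and> x \<noteq> w"
proof -
  assume x: "x \<in> set (tl Q2)"
  have ne: "Q2 \<noteq> []" using Qs_ne[of 2, unfolded Qs123] by simp
  then have "Q2 = w # tl Q2" using start(2) by (metis list.collapse)
  moreover have "distinct Q2" using Qs_dist[of 2, unfolded Qs123] by simp
  ultimately have "w \<notin> set (tl Q2)" by (metis distinct.simps(2))
  then show ?thesis using x in_set_tlD by fastforce
qed

lemma Pdist: "distinct P"
proof -
  have "distinct Q1" "distinct Q2" using Qs_dist[of 1, unfolded Qs123] Qs_dist[of 2, unfolded Qs123] by auto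
  moreover have "set (rev Q1) \<inter> set (tl Q2) = {}"
  proof (rule ccontr)
    assume "set (rev Q1) \<inter> set (tl Q2) \<noteq> {}"
    then obtain x where "x \<in> set Q1" "x \<in> set (tl Q2)" by auto
    then show False using Q2tl disj(1) by blast
  qed
  ultimately show ?thesis unfolding P_def by (simp add: distinct_tl)
qed

lemma P1: "P ! 1 \<in> T" "P ! 1 \<notin> A"
proof -
  have n: "length Q1 \<ge> 2" using Qs_len[of 1, unfolded Qs123] by simp
  have "P ! 1 = rev Q1 ! 1" unfolding P_def using n by (simp add: nth_append)
  also have "\<dots> = Q1 ! (length Q1 - 2)" using n rev_nth[of 1 Q1] by (simp add: numeral_2_eq_2)
  finally have e: "P ! 1 = Q1 ! (length Q1 - 2)" .
  have m: "P ! 1 \<in> set Q1" using e n by simp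
  then show "P ! 1 \<in> T" unfolding T_def by simp
  have l1: "P ! 1 \<noteq> last Q1"
  proof -
    have "Q1 \<noteq> []" using n by auto
    then have "last Q1 = Q1 ! (length Q1 - 1)" by (simp add: last_conv_nth)
    moreover have "Q1 ! (length Q1 - 2) \<noteq> Q1 ! (length Q1 - 1)"
      using nth_eq_iff_index_eq[of Q1 "length Q1 - 2" "length Q1 - 1"] Qs_dist[of 1, unfolded Qs123] n by auto
    ultimately show ?thesis using e by simp
  qed
  have l2: "P ! 1 \<noteq> last Q2"
  proof
    assume h: "P ! 1 = last Q2"
    have "last Q2 \<noteq> w" using ends wA by auto
    moreover have "last Q2 \<in> set Q2" using Qs_ne[of 2, unfolded Qs123] by simp
    ultimately have "last Q2 \<in> (set Q1 - {w}) \<inter> (set Q2 - {w})" using m h by simp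
    then show False using disj(1) by simp
  qed
  have l3: "P ! 1 \<noteq> last Q3"
  proof
    assume h: "P ! 1 = last Q3"
    have "last Q3 \<noteq> w" using ends wA by auto
    moreover have "last Q3 \<in> set Q3" using Qs_ne[of 3, unfolded Qs123] by simp
    ultimately have "last Q3 \<in> (set Q1 - {w}) \<inter> (set Q3 - {w})" using m h by simp
    then show False using disj(2) by simp
  qed
  show "P ! 1 \<notin> A"
  proof
    assume "P ! 1 \<in> A"
    then have "P ! 1 \<in> A \<inter> (set Q1 \<union> set Q2 \<union> set Q3)" using m by simp
    then have "P ! 1 \<in> {last Q1, last Q2, last Q3}" using AT(2) by simp
    then show False using l1 l2 l3 by simp
  qed
qed

lemma Pedge: "Suc i < length P \<Longrightarrow> {P ! i, P ! Suc i} \<in> E"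
proof -
  assume i: "Suc i < length P"
  define n1 where "n1 = length Q1"
  have n: "n1 \<ge> 2" "length Q2 \<ge> 2" using Qs_len[of 1, unfolded Qs123] Qs_len[of 2, unfolded Qs123] n1_def by auto
  have e1: "Suc k < length Q1 \<Longrightarrow> {Q1 ! k, Q1 ! Suc k} \<in> E" for k using Qs_edge[of k 1, unfolded Qs123] by simp
  have e2: "Suc k < length Q2 \<Longrightarrow> {Q2 ! k, Q2 ! Suc k} \<in> E" for k using Qs_edge[of k 2, unfolded Qs123] by simp
  consider "Suc i < n1" | "Suc i = n1" | "Suc i > n1" by linarith
  then show ?thesis
  proof cases
    case 1
    have a: "P ! i = Q1 ! Suc (n1 - Suc (Suc i))" unfolding P_def using 1 n1_def by (simp add: nth_append rev_nth Suc_diff_Suc)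
    have b: "P ! Suc i = Q1 ! (n1 - Suc (Suc i))" unfolding P_def using 1 n1_def by (simp add: nth_append rev_nth)
    have "Suc (n1 - Suc (Suc i)) < length Q1" using 1 n1_def by simp
    then show ?thesis using e1 a b by (simp add: insert_commute)
  next
    case 2
    have a: "P ! i = Q2 ! 0" unfolding P_def using 2 n1_def Qs_0[of 1, unfolded Qs123] Qs_0[of 2, unfolded Qs123] by (simp add: nth_append rev_nth)
    have b: "P ! Suc i = Q2 ! 1" unfolding P_def using 2 n1_def n by (simp add: nth_append nth_tl)
    show ?thesis using e2[of 0] a b n by simp
  next
    case 3
    have a: "P ! i = Q2 ! Suc (i - n1)" unfolding P_def using 3 n1_def i lenP(1) by (simp add: nth_append nth_tl)
    have b: "P ! Suc i = Q2 ! Suc (Suc (i - n1))" unfolding P_def using 3 n1_def i lenP(1) by (simp add: nth_append nth_tl Suc_diff_le)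
    have "Suc (Suc (i - n1)) < length Q2" using 3 n1_def i lenP(1) by simp
    then show ?thesis using e2 a b by simp
  qed
qed

end



context L begin

lemma leg_hom:
  assumes sS: "(c0,j0,q) \<in> S" and j0: "j0 \<noteq> 0"
  shows "\<exists>\<phi>. hom \<phi> \<and> \<phi> (c0,j0,q) \<in> T \<and> \<phi> (c0,j0,q) \<notin> A \<and>
     (\<forall>s\<in>S. \<not> (fst s = c0 \<and> (fst (snd s) = j0 \<or> fst (snd s) = 0) \<and> q \<le> snd (snd s) + 1) \<longrightarrow> \<phi> s \<in> B)"
proof -
  have q: "1 \<le> q" "q \<le> t" "c0 < t" "j0 \<in> {1,2,3}" using sS j0 memS'[of c0 j0 q] by auto
  define onP where "onP x \<longleftrightarrow> fst x = c0 \<and> (fst (snd x) = j0 \<or> fst (snd x) = 0) \<and> q \<le> snd (snd x) + 1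
      \<and> snd (snd x) + 1 - q < length P" for x :: "nat \<times> nat \<times> nat"
  define X where "X = {x\<in>S. \<not> onP x}"
  define y0 where "y0 = (if q = 1 then (c0,0::nat,0::nat) else (c0,j0,q-1))"
  define D where "D = {(c0,j0,q), y0}"
  have y0S: "y0 \<in> S" using q unfolding y0_def by (auto simp: memS')
  have DS: "D \<subseteq> S" using sS y0S unfolding D_def by auto
  have cD: "card D = 2" using q j0 unfolding D_def y0_def by auto
  have "\<forall>x\<in>D. onP x" unfolding D_def onP_def y0_def using lenP(2) q by auto
  then have XD: "X \<subseteq> S - D" unfolding X_def by blast
  have "card X \<le> card (S - D)" using XD finS' by (simp add: card_mono)
  also have "\<dots> = card S - 2" using DS cD finS' by (simp add: card_Diff_subset finite_subset)
  also have "\<dots> \<le> card B" using cardB2 cardS' by linarith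
  finally have cXB: "card X \<le> card B" .
  have fX: "finite X" using finS' unfolding X_def by simp
  obtain g where g: "g ` X \<subseteq> B" "inj_on g X" using card_le_inj[OF fX finB cXB] by blast
  define \<phi> where "\<phi> x = (if onP x then P ! (snd (snd x) + 1 - q) else g x)" for x
  have imX: "\<phi> x \<in> B" if "x \<in> S" "\<not> onP x" for x
    using that g unfolding \<phi>_def X_def by auto
  have imP: "\<phi> x \<in> T" if "onP x" for x
    using that Pset nth_mem unfolding \<phi>_def onP_def by fastforce
  have inj: "inj_on \<phi> S"
  proof (rule inj_onI)
    fix x y assume xS: "x \<in> S" and yS: "y \<in> S" and eq: "\<phi> x = \<phi> y"
    obtain c j p c' j' p' where xy: "x = (c,j,p)" "y = (c',j',p')" by (cases x, cases y) auto
    show "x = y"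
    proof (cases "onP x")
      case wx: True
      show ?thesis
      proof (cases "onP y")
        case wy: True
        have h: "c = c0" "c' = c0" "j = j0 \<or> j = 0" "j' = j0 \<or> j' = 0" "q \<le> p + 1" "q \<le> p' + 1"
          "p + 1 - q < length P" "p' + 1 - q < length P"
          using wx wy xy unfolding onP_def by auto
        have "P ! (p + 1 - q) = P ! (p' + 1 - q)" using eq wx wy xy unfolding \<phi>_def by simp
        then have "p + 1 - q = p' + 1 - q" using nth_eq_iff_index_eq[OF Pdist h(7) h(8)] by simp
        then have pp: "p = p'" using h by linarith
        have "j = 0 \<longleftrightarrow> p = 0" "j' = 0 \<longleftrightarrow> p' = 0" using xS yS xy memS'[of c j p] memS'[of c' j' p'] by auto
        then have "j = j'" using h pp by auto
        then show ?thesis using xy h pp by simp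
      next
        case wy: False
        have "\<phi> x \<in> T" "\<phi> y \<in> B" using imP[OF wx] imX[OF yS wy] by auto
        then show ?thesis using eq BT by auto
      qed
    next
      case wx: False
      show ?thesis
      proof (cases "onP y")
        case wy: True
        have "\<phi> y \<in> T" "\<phi> x \<in> B" using imP[OF wy] imX[OF xS wx] by auto
        then show ?thesis using eq BT by auto
      next
        case wy: False
        have "g x = g y" using eq wx wy unfolding \<phi>_def by simp
        then show ?thesis using g(2) xS yS wx wy unfolding X_def inj_on_def by blast
      qed
    qed
  qed
  have edges: "{\<phi> x, \<phi> y} \<in> E" if xS: "x \<in> S" and yS: "y \<in> S" and a: "adj x y" for x y
  proof -
    obtain c j p c' j' p' where xy: "x = (c,j,p)" "y = (c',j',p')" by (cases x, cases y) auto
    have h: "c' = c" "j' \<in> {1,2,3}" "p' = Suc p" "(j = 0 \<and> p = 0) \<or> (j = j' \<and> p \<ge> 1)"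
      using a xy unfolding adj_def by auto
    have xney: "x \<noteq> y" using xy h by auto
    show ?thesis
    proof (cases "onP x")
      case wx: True
      show ?thesis
      proof (cases "onP y")
        case wy: True
        have f: "q \<le> p + 1" "Suc p + 1 - q < length P" using wx wy xy h unfolding onP_def by auto
        have i: "p + 2 - q = Suc (p + 1 - q)" "Suc (p + 1 - q) < length P" using f by linarith+
        have "\<phi> x = P ! (p + 1 - q)" "\<phi> y = P ! Suc (p + 1 - q)" using wx wy xy h i unfolding \<phi>_def by auto
        then show ?thesis using Pedge[OF i(2)] by simp
      next
        case wy: False
        have f: "q \<le> p + 1" "p + 1 - q < length P" "j = j0 \<or> j = 0" "c = c0"
          using wx xy unfolding onP_def by auto
        have g2: "\<not> (Suc p + 1 - q < length P) \<or> j' \<noteq> j0"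
          using wy xy h f unfolding onP_def by auto
        have "p + 1 - q = 0 \<or> p + 1 - q = length P - 1"
        proof (cases "j = 0")
          case True
          then have "p = 0" using h by auto
          then show ?thesis using f q(1) by linarith
        next
          case False
          then have "j' = j0" using h f by auto
          then have "\<not> (Suc p + 1 - q < length P)" using g2 by simp
          then show ?thesis using f by linarith
        qed
        then have "\<phi> x \<in> A" using wx xy P0 Plast unfolding \<phi>_def by auto
        moreover have "\<phi> y \<in> B" using imX[OF yS wy] .
        moreover have "\<phi> x \<noteq> \<phi> y" using imP[OF wx] \<open>\<phi> y \<in> B\<close> BT by auto
        ultimately show ?thesis using clq BA by auto
      qed
    next
      case wx: False
      show ?thesis
      proof (cases "onP y")
        case wy: True
        have f: "q \<le> Suc p + 1" "Suc p + 1 - q < length P" "j' = j0 \<or> j' = 0" "c = c0"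
          using wy xy h unfolding onP_def by auto
        then have "j' = j0" using h(2) f(3) by auto
        then have "j = j0 \<or> j = 0" using h by auto
        then have "\<not> (q \<le> p + 1 \<and> p + 1 - q < length P)" using wx xy f unfolding onP_def by auto
        then have "p + 2 - q = 0" using f by linarith
        then have "\<phi> y \<in> A" using wy xy h P0 unfolding \<phi>_def by auto
        moreover have "\<phi> x \<in> B" using imX[OF xS wx] .
        moreover have "\<phi> x \<noteq> \<phi> y" using imP[OF wy] \<open>\<phi> x \<in> B\<close> BT by auto
        ultimately show ?thesis using clq BA by auto
      next
        case wy: False
        have "\<phi> x \<in> B" "\<phi> y \<in> B" using imX xS yS wx wy by auto
        moreover have "\<phi> x \<noteq> \<phi> y" using inj xS yS xney unfolding inj_on_def by blast
        ultimately show ?thesis using clq BA by auto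
      qed
    qed
  qed
  have imV: "\<phi> ` S \<subseteq> V"
  proof
    fix z assume "z \<in> \<phi> ` S"
    then obtain x where x: "x \<in> S" "z = \<phi> x" by blast
    then show "z \<in> V" using imX[of x] imP[of x] BA AV TV by (cases "onP x") auto
  qed
  have hom: "hom \<phi>" unfolding hom_def using inj imV edges by blast
  have "onP (c0,j0,q)" unfolding onP_def using lenP(2) by simp
  then have "\<phi> (c0,j0,q) = P ! 1" unfolding \<phi>_def by simp
  then have "\<phi> (c0,j0,q) \<in> T" "\<phi> (c0,j0,q) \<notin> A" using P1 by auto
  moreover have "\<phi> s \<in> B" if "s \<in> S" "\<not> (fst s = c0 \<and> (fst (snd s) = j0 \<or> fst (snd s) = 0) \<and> q \<le> snd (snd s) + 1)" for s
  proof -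
    have "\<not> onP s"
    proof
      assume "onP s"
      then have "fst s = c0 \<and> (fst (snd s) = j0 \<or> fst (snd s) = 0) \<and> q \<le> snd (snd s) + 1"
        unfolding onP_def by (elim conjE) (intro conjI; assumption)
      with that(2) show False by (rule notE)
    qed
    then show ?thesis by (rule imX[OF that(1)])
  qed
  ultimately have "hom \<phi> \<and> \<phi> (c0,j0,q) \<in> T \<and> \<phi> (c0,j0,q) \<notin> A \<and>
     (\<forall>s\<in>S. \<not> (fst s = c0 \<and> (fst (snd s) = j0 \<or> fst (snd s) = 0) \<and> q \<le> snd (snd s) + 1) \<longrightarrow> \<phi> s \<in> B)"
    using hom by (intro conjI ballI impI) auto
  then show ?thesis by (rule exI[of _ \<phi>])
qed

end



context L begin

lemma cover:
  assumes x: "(c,j,p) \<in> S" and y: "(c',j',p') \<in> S" and ne: "(c,j,p) \<noteq> (c',j',p')"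
    and na: "\<not> adj (c,j,p) (c',j',p')" "\<not> adj (c',j',p') (c,j,p)"
  shows "(j = 0 \<and> j' = 0) \<or> (j \<noteq> 0 \<and> \<not> (c' = c \<and> (j' = j \<or> j' = 0) \<and> p \<le> p' + 1))
     \<or> (j' \<noteq> 0 \<and> \<not> (c = c' \<and> (j = j' \<or> j = 0) \<and> p' \<le> p + 1))"
proof -
  have m: "c < t" "j = 0 \<and> p = 0 \<or> j \<in> {1,2,3} \<and> 1 \<le> p \<and> p \<le> t"
          "c' < t" "j' = 0 \<and> p' = 0 \<or> j' \<in> {1,2,3} \<and> 1 \<le> p' \<and> p' \<le> t"
    using x y memS'[of c j p] memS'[of c' j' p'] by auto
  have na1: "\<not> (c = c' \<and> j' \<in> {1,2,3} \<and> ((j = 0 \<and> p = 0 \<and> p' = 1) \<or> (j = j' \<and> p' = Suc p \<and> p \<ge> 1)))"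
    using na(1) unfolding adj_def by simp
  have na2: "\<not> (c' = c \<and> j \<in> {1,2,3} \<and> ((j' = 0 \<and> p' = 0 \<and> p = 1) \<or> (j' = j \<and> p = Suc p' \<and> p' \<ge> 1)))"
    using na(2) unfolding adj_def by simp
  show ?thesis
  proof (rule ccontr)
    assume "\<not> ?thesis"
    then have h: "\<not> (j = 0 \<and> j' = 0)" "j \<noteq> 0 \<longrightarrow> (c' = c \<and> (j' = j \<or> j' = 0) \<and> p \<le> p' + 1)"
      "j' \<noteq> 0 \<longrightarrow> (c = c' \<and> (j = j' \<or> j = 0) \<and> p' \<le> p + 1)" by auto
    show False
    proof (cases "j = 0")
      case True
      then have j': "j' \<noteq> 0" and p: "p = 0" using h(1) m(2) by auto
      then have "c = c'" "p' \<le> 1" "j' \<in> {1,2,3}" "p' \<ge> 1" using h(3) m(4) by auto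
      then show False using na1 True p by auto
    next
      case False
      then have j: "j \<in> {1,2,3}" "p \<ge> 1" using m(2) by auto
      have hc: "c' = c" "j' = j \<or> j' = 0" "p \<le> p' + 1" using h(2) False by auto
      show False
      proof (cases "j' = 0")
        case True
        then have "p' = 0" using m(4) by auto
        then have "p = 1" using hc j by auto
        then show False using na2 True \<open>p' = 0\<close> hc j by auto
      next
        case False
        then have "j' = j" "p' \<le> p + 1" "p' \<ge> 1" using h(3) hc m(4) by auto
        then have "p' = p \<or> p' = Suc p \<or> p = Suc p'" using hc by auto
        then show False using na1 na2 ne hc j \<open>j' = j\<close> \<open>p' \<ge> 1\<close> by auto
      qed
    qed
  qed
qed

lemma wT: "w \<in> T" "w \<notin> A"
  using start(1) Qs_ne[of 1, unfolded Qs123] wA unfolding T_def by (auto dest: hd_in_set)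

lemma final: "int_reach V E S (tS_E t)"
proof -
  define good where "good s \<phi> \<longleftrightarrow> hom \<phi> \<and> (if fst (snd s) = 0
       then \<phi> s = w \<and> (\<forall>c<t. c \<noteq> fst s \<longrightarrow> \<phi> (c,0,0) \<in> B)
       else \<phi> s \<in> T \<and> \<phi> s \<notin> A \<and> (\<forall>s'\<in>S. \<not> (fst s' = fst s \<and> (fst (snd s') = fst (snd s) \<or> fst (snd s') = 0) \<and> snd (snd s) \<le> snd (snd s') + 1) \<longrightarrow> \<phi> s' \<in> B))"
    for s and \<phi> :: "nat \<times> nat \<times> nat \<Rightarrow> 'a"
  have ex: "\<forall>s\<in>S. \<exists>\<phi>. good s \<phi>"
  proof
    fix s assume sS: "s \<in> S"
    obtain c j p where s: "s = (c,j,p)" by (cases s) auto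
    show "\<exists>\<phi>. good s \<phi>"
    proof (cases "j = 0")
      case True
      then have "p = 0" "c < t" using sS s memS'[of c j p] by auto
      obtain \<phi> where "hom \<phi> \<and> \<phi> (c,0,0) = w \<and> (\<forall>c'<t. c' \<noteq> c \<longrightarrow> \<phi> (c',0,0) \<in> B)"
        using center_hom[OF \<open>c < t\<close>] by blast
      then have "good s \<phi>" unfolding good_def using s True \<open>p = 0\<close> by simp
      then show ?thesis by blast
    next
      case False
      obtain \<phi> where "hom \<phi> \<and> \<phi> (c,j,p) \<in> T \<and> \<phi> (c,j,p) \<notin> A \<and>
        (\<forall>s'\<in>S. \<not> (fst s' = c \<and> (fst (snd s') = j \<or> fst (snd s') = 0) \<and> p \<le> snd (snd s') + 1) \<longrightarrow> \<phi> s' \<in> B)"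
        using leg_hom[of c j p] sS s False by blast
      then have "good s \<phi>" unfolding good_def using s False by simp
      then show ?thesis by blast
    qed
  qed
  obtain \<Psi> where \<Psi>: "\<forall>s\<in>S. good s (\<Psi> s)" using bchoice[OF ex] by blast
  have GV: "graph V E" using G unfolding V_def T_def .
  have S0: "(0,0,0) \<in> S" using t by (simp add: memS')
  show ?thesis
  proof (rule realize[OF GV finS', where \<Phi> = "\<Psi> ` S"])
    show "\<forall>x\<in>S. {x} \<notin> tS_E t" using single_notin by blast
    show "finite (\<Psi> ` S)" using finS' by simp
    show "\<Psi> ` S \<noteq> {}" using S0 by blast
    show "\<forall>\<phi>\<in>\<Psi> ` S. inj_on \<phi> S \<and> \<phi> ` S \<subseteq> V \<and> (\<forall>x\<in>S. \<forall>y\<in>S. {x, y} \<in> tS_E t \<longrightarrow> {\<phi> x, \<phi> y} \<in> E)"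
    proof
      fix \<phi> assume "\<phi> \<in> \<Psi> ` S"
      then have h: "hom \<phi>" using \<Psi> unfolding good_def by blast
      have "{\<phi> x, \<phi> y} \<in> E" if "x \<in> S" "y \<in> S" "{x, y} \<in> tS_E t" for x y
      proof -
        have "adj x y \<or> adj y x" using tS_E_adj[OF that(3)] .
        then show ?thesis using h that(1,2) unfolding hom_def by (metis insert_commute)
      qed
      then show "inj_on \<phi> S \<and> \<phi> ` S \<subseteq> V \<and> (\<forall>x\<in>S. \<forall>y\<in>S. {x, y} \<in> tS_E t \<longrightarrow> {\<phi> x, \<phi> y} \<in> E)"
        using h unfolding hom_def by blast
    qed
    show "\<forall>x\<in>S. \<forall>y\<in>S. x \<noteq> y \<longrightarrow> {x, y} \<notin> tS_E t \<longrightarrow> (\<exists>\<phi>\<in>\<Psi> ` S. {\<phi> x, \<phi> y} \<notin> E)"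
    proof (intro ballI impI)
      fix x y assume xS: "x \<in> S" and yS: "y \<in> S" and ne: "x \<noteq> y" and nE: "{x, y} \<notin> tS_E t"
      obtain c j p c' j' p' where xy: "x = (c,j,p)" "y = (c',j',p')" by (cases x, cases y) auto
      have na: "\<not> adj (c,j,p) (c',j',p')" "\<not> adj (c',j',p') (c,j,p)"
        using nE xS yS xy tS_E_iff[of x t y] unfolding S_def by auto
      have cv: "(j = 0 \<and> j' = 0) \<or> (j \<noteq> 0 \<and> \<not> (c' = c \<and> (j' = j \<or> j' = 0) \<and> p \<le> p' + 1))
     \<or> (j' \<noteq> 0 \<and> \<not> (c = c' \<and> (j = j' \<or> j = 0) \<and> p' \<le> p + 1))"
        using cover[of c j p c' j' p'] xS yS ne xy na by simp
      have gx: "good x (\<Psi> x)" and gy: "good y (\<Psi> y)" using \<Psi> xS yS by auto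
      consider (cc) "j = 0 \<and> j' = 0" | (lx) "j \<noteq> 0 \<and> \<not> (c' = c \<and> (j' = j \<or> j' = 0) \<and> p \<le> p' + 1)"
        | (ly) "j' \<noteq> 0 \<and> \<not> (c = c' \<and> (j = j' \<or> j = 0) \<and> p' \<le> p + 1)" using cv by blast
      then show "\<exists>\<phi>\<in>\<Psi> ` S. {\<phi> x, \<phi> y} \<notin> E"
      proof cases
        case cc
        then have "p = 0" "p' = 0" "c' < t" using xS yS xy memS'[of c j p] memS'[of c' j' p'] by auto
        then have "c' \<noteq> c" using ne xy cc by auto
        have "\<Psi> x x = w" "\<Psi> x y \<in> B" using gx cc xy \<open>c' < t\<close> \<open>c' \<noteq> c\<close> \<open>p' = 0\<close> unfolding good_def by auto
        then have "{\<Psi> x x, \<Psi> x y} \<notin> E" using antiE wT by simp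
        then show ?thesis using xS by blast
      next
        case lx
        have "\<Psi> x x \<in> T" "\<Psi> x x \<notin> A" "\<Psi> x y \<in> B" using gx lx xy yS unfolding good_def by auto
        then have "{\<Psi> x x, \<Psi> x y} \<notin> E" using antiE by simp
        then show ?thesis using xS by blast
      next
        case ly
        have "\<Psi> y y \<in> T" "\<Psi> y y \<notin> A" "\<Psi> y x \<in> B" using gy ly xy xS unfolding good_def by auto
        then have "{\<Psi> y y, \<Psi> y x} \<notin> E" using antiE by simp
        then have "{\<Psi> y x, \<Psi> y y} \<notin> E" by (simp add: insert_commute)
        then show ?thesis using yS by blast
      qed
    qed
  qed
qed

end


theorem mainTheorem9:
  fixes t :: nat and A :: "'a set" and E :: "'a set set"
    and Q1 Q2 Q3 :: "'a list" and w :: 'a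
  assumes t: "t \<ge> 1"
    and G: "graph (A \<union> (set Q1 \<union> set Q2 \<union> set Q3)) E"
    and sizeA: "card A \<ge> 3 * t^2 + t + 1"
    and cliqueA: "clique E A"
    and paths: "is_path E Q1" "is_path E Q2" "is_path E Q3"
    and start: "hd Q1 = w" "hd Q2 = w" "hd Q3 = w"
    and wA: "w \<notin> A"
    and ends: "last Q1 \<in> A" "last Q2 \<in> A" "last Q3 \<in> A"
    and disj: "(set Q1 - {w}) \<inter> (set Q2 - {w}) = {}"
              "(set Q1 - {w}) \<inter> (set Q3 - {w}) = {}"
              "(set Q2 - {w}) \<inter> (set Q3 - {w}) = {}"
    and degw: "degree (A \<union> (set Q1 \<union> set Q2 \<union> set Q3)) E w = 3"
    and AT: "card (A \<inter> (set Q1 \<union> set Q2 \<union> set Q3)) = 3"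
            "A \<inter> (set Q1 \<union> set Q2 \<union> set Q3) = {last Q1, last Q2, last Q3}"
    and cyc: "is_cycle (set Q1 \<union> set Q2) (induced_edges E (set Q1 \<union> set Q2))"
    and anti: "anticomplete E (A - (set Q1 \<union> set Q2 \<union> set Q3)) ((set Q1 \<union> set Q2 \<union> set Q3) - A)"
  shows "int_reach (A \<union> (set Q1 \<union> set Q2 \<union> set Q3)) E (tS_V t) (tS_E t)"
proof -
  have l: "L t A E Q1 Q2 Q3 w"
    by (rule L.intro[OF t G sizeA cliqueA paths start wA ends disj AT anti])
  show ?thesis using L.final[OF l] unfolding L.V_def[OF l] L.T_def[OF l] L.S_def[OF l] .
qed

end
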